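(* There is no deterministic online algorithm with competitive ratio $o(n)$ for the degree-bounded group Steiner tree problem, where $n$ is the number of vertices. That is, for every deterministic online algorithm $\mathcal{A}$ and every function $f$ with $f(n)=o(n)$, there exist an instance on some number $n$ of vertices and a sequence of demand groups such that the maximum degree of $\mathcal{A}$'s final subgraph exceeds $f(n)\cdot\mathrm{OPT}$.
   Context: Online degree-bounded group Steiner tree: an undirected graph $G$ with a root vertex is given in advance; demands are subsets (groups) of vertices arriving one by one, and after each arrival the online algorithm must add edges (never removing any) so that for every group seen so far, at least one vertex of the group is connected to the root. The objective is to minimize the maximum vertex degree of the final subgraph; $\mathrm{OPT}$ is the minimum maximum degree of a subgraph in which every demand group has a vertex connected to the root. The competitive ratio is the worst-case ratio of the algorithm's maximum degree to $\mathrm{OPT}$. *)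

theory Defs
  imports Main "HOL-Library.Landau_Symbols"
begin

text \<open>Vertices of an instance on n vertices are 0..n-1; edges are 2-element vertex sets
  (simple undirected graph).  Demand groups arrive as a list of vertex sets.\<close>

definition graph_on :: "nat \<Rightarrow> nat set set \<Rightarrow> bool" where
  "graph_on n E \<longleftrightarrow> (\<forall>e\<in>E. e \<subseteq> {..<n} \<and> card e = 2)"

definition conn :: "nat set set \<Rightarrow> nat \<Rightarrow> nat \<Rightarrow> bool" where
  "conn H r v \<longleftrightarrow> (r, v) \<in> {(x, y). {x, y} \<in> H}\<^sup>*"

definition feasible :: "nat set set \<Rightarrow> nat \<Rightarrow> nat set list \<Rightarrow> nat set set \<Rightarrow> bool" where
  "feasible E r gs H \<longleftrightarrow> H \<subseteq> E \<and> (\<forall>g\<in>set gs. \<exists>v\<in>g. conn H r v)"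

definition valid_instance :: "nat \<Rightarrow> nat set set \<Rightarrow> nat \<Rightarrow> nat set list \<Rightarrow> bool" where
  "valid_instance n E r gs \<longleftrightarrow> graph_on n E \<and> r < n \<and> (\<forall>g\<in>set gs. g \<subseteq> {..<n})
     \<and> (\<exists>H. feasible E r gs H)"

definition deg :: "nat set set \<Rightarrow> nat \<Rightarrow> nat" where
  "deg H v = card {e\<in>H. v \<in> e}"

definition maxdeg :: "nat \<Rightarrow> nat set set \<Rightarrow> nat" where
  "maxdeg n H = Max ((\<lambda>v. deg H v) ` {..<n})"

definition opt :: "nat \<Rightarrow> nat set set \<Rightarrow> nat \<Rightarrow> nat set list \<Rightarrow> nat" where
  "opt n E r gs = Min (maxdeg n ` {H. feasible E r gs H})"

text \<open>A deterministic online algorithm: given the instance (n, E, r) and the demand groups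
  seen so far, it returns its current edge set.  Being a function of the prefix makes it
  deterministic and online.\<close>
definition online_alg :: "(nat \<Rightarrow> nat set set \<Rightarrow> nat \<Rightarrow> nat set list \<Rightarrow> nat set set) \<Rightarrow> bool" where
  "online_alg A \<longleftrightarrow> (\<forall>n E r gs. valid_instance n E r gs \<longrightarrow>
      feasible E r gs (A n E r gs) \<and> (\<forall>k\<le>length gs. A n E r (take k gs) \<subseteq> A n E r gs))"

end

theory Submission
  imports Defs
begin

context
  fixes A :: "nat \<Rightarrow> nat set set \<Rightarrow> nat \<Rightarrow> nat set list \<Rightarrow> nat set set"
    and n :: nat
  assumes alg: "online_alg A"
begin

definition EE :: "nat set set" where "EE = (\<lambda>v. {0, v}) ` {1..<n}"

definition CC :: "nat set list \<Rightarrow> nat set" where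
  "CC gs = {v\<in>{1..<n}. conn (A n EE 0 gs) 0 v}"

definition Inv :: "nat set list \<Rightarrow> bool" where
  "Inv gs \<longleftrightarrow> (\<forall>g\<in>set gs. g \<noteq> {} \<and> g \<subseteq> {1..<n} \<and> {1..<n} - CC gs \<subseteq> g)
     \<and> (gs \<noteq> [] \<longrightarrow> (\<exists>w. \<forall>g\<in>set gs. w \<in> g))"

lemma valid: "(\<forall>g\<in>set gs. g \<noteq> {} \<and> g \<subseteq> {1..<n}) \<Longrightarrow> 1 < n \<Longrightarrow> valid_instance n EE 0 gs"
  unfolding valid_instance_def graph_on_def feasible_def EE_def conn_def
  by (fastforce intro!: exI[of _ "(\<lambda>v. {0, v}) ` {1..<n}"] r_into_rtrancl)

lemma conn_mono: "H \<subseteq> H' \<Longrightarrow> conn H r v \<Longrightarrow> conn H' r v"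
  unfolding conn_def by (erule rtrancl_mono[THEN subsetD, rotated]) auto

lemma step: "Inv gs \<Longrightarrow> 1 < n \<Longrightarrow> card (CC gs) < n - 1 \<Longrightarrow>
   \<exists>gs'. Inv gs' \<and> card (CC gs') > card (CC gs)"
proof -
  assume I: "Inv gs" and n: "1 < n" and c: "card (CC gs) < n - 1"
  define U where "U = {1..<n} - CC gs"
  have sub: "CC gs \<subseteq> {1..<n}" unfolding CC_def by auto
  have "U \<noteq> {}"
  proof
    assume "U = {}" then have "CC gs = {1..<n}" using sub unfolding U_def by auto
    then show False using c by simp
  qed
  then obtain w where w: "w \<in> U" by auto
  define gs' where "gs' = gs @ [U]"
  have gr: "\<forall>g\<in>set gs'. g \<noteq> {} \<and> g \<subseteq> {1..<n}"
    using I \<open>U \<noteq> {}\<close> unfolding gs'_def Inv_def U_def by auto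
  have v: "valid_instance n EE 0 gs'" using valid[OF gr n] .
  have X: "feasible EE 0 gs' (A n EE 0 gs') \<and> (\<forall>k\<le>length gs'. A n EE 0 (take k gs') \<subseteq> A n EE 0 gs')"
    using alg v unfolding online_alg_def by blast
  then have F: "feasible EE 0 gs' (A n EE 0 gs')" by blast
  have M: "A n EE 0 gs \<subseteq> A n EE 0 gs'"
    using X[THEN conjunct2, rule_format, of "length gs"] unfolding gs'_def by simp
  have CCm: "CC gs \<subseteq> CC gs'" unfolding CC_def using conn_mono[OF M] by auto
  obtain u where u: "u \<in> U" "conn (A n EE 0 gs') 0 u"
    using F unfolding feasible_def gs'_def by auto
  have uc: "u \<in> CC gs' - CC gs" using u unfolding U_def CC_def by auto
  have fin: "finite (CC gs')" unfolding CC_def by auto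
  have "CC gs \<subset> CC gs'" using CCm uc by auto
  then have card_lt: "card (CC gs) < card (CC gs')" using fin psubset_card_mono by blast
  have "Inv gs'"
    unfolding Inv_def
  proof (intro conjI impI)
    have "{1..<n} - CC gs' \<subseteq> U" using CCm unfolding U_def by auto
    moreover have "\<forall>g\<in>set gs. U \<subseteq> g" using I unfolding Inv_def U_def by blast
    ultimately show "\<forall>g\<in>set gs'. g \<noteq> {} \<and> g \<subseteq> {1..<n} \<and> {1..<n} - CC gs' \<subseteq> g"
      using gr unfolding gs'_def by auto
    show "\<exists>w. \<forall>g\<in>set gs'. w \<in> g"
    proof (intro exI[of _ w] ballI)
      fix g assume g: "g \<in> set gs'"
      have "\<forall>g\<in>set gs. U \<subseteq> g" using I unfolding Inv_def U_def by blast
      then show "w \<in> g" using g w unfolding gs'_def by auto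
    qed
  qed
  then show ?thesis using card_lt by blast
qed

lemma reach: "1 < n \<Longrightarrow> m \<le> n - 1 \<Longrightarrow> \<exists>gs. Inv gs \<and> card (CC gs) \<ge> m"
proof (induction m)
  case 0
  then show ?case by (intro exI[of _ "[]"]) (simp add: Inv_def)
next
  case (Suc m)
  then obtain gs where g: "Inv gs" "card (CC gs) \<ge> m" by auto
  show ?case
  proof (cases "card (CC gs) \<ge> Suc m")
    case True then show ?thesis using g by blast
  next
    case False
    then have "card (CC gs) < n - 1" using Suc by auto
    from step[OF g(1) Suc(2) this] obtain gs' where "Inv gs'" "card (CC gs') > card (CC gs)" by auto
    then show ?thesis using g by (intro exI[of _ gs']) auto
  qed
qed

lemma star_conn: assumes HE: "H \<subseteq> EE" and cv: "conn H 0 v" shows "v = 0 \<or> {0, v} \<in> H"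
  using cv unfolding conn_def
proof (induction v rule: rtrancl_induct)
  case base then show ?case by simp
next
  case (step y z)
  then have yz: "{y, z} \<in> H" by auto
  then obtain j where "{y, z} = {0, j}" "j \<ge> 1" using HE unfolding EE_def by auto
  then show ?case using step yz by (auto simp: doubleton_eq_iff insert_commute)
qed

end

theorem theorem4:
  fixes A :: "nat \<Rightarrow> nat set set \<Rightarrow> nat \<Rightarrow> nat set list \<Rightarrow> nat set set"
    and f :: "nat \<Rightarrow> real"
  assumes "online_alg A"
    and "f \<in> o(\<lambda>n. real n)"
  shows "\<exists>n E r gs. valid_instance n E r gs \<and>
           real (maxdeg n (A n E r gs)) > f n * real (opt n E r gs)"
proof -
  have "eventually (\<lambda>x. norm (f x) \<le> (1/2) * norm (real x)) at_top"
    by (rule landau_o.smallD[OF assms(2)]) simp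
  then obtain N where N: "\<And>x. x \<ge> N \<Longrightarrow> norm (f x) \<le> (1/2) * norm (real x)"
    unfolding eventually_at_top_linorder by auto
  define n where "n = max N 3"
  have n3: "n \<ge> 3" and fn: "f n \<le> real n / 2"
    using N[of n] unfolding n_def by auto
  let ?E = "EE n"
  obtain gs where I: "Inv A n gs" and c: "card (CC A n gs) \<ge> n - 1"
    using reach[OF assms(1), of n "n - 1"] n3 by auto
  have gr: "\<forall>g\<in>set gs. g \<noteq> {} \<and> g \<subseteq> {1..<n}" using I unfolding Inv_def[OF assms(1)] by auto
  have v: "valid_instance n ?E 0 gs" using valid[OF assms(1) gr] n3 by auto
  let ?H = "A n ?E 0 gs"
  have HE: "?H \<subseteq> ?E" using assms(1) v unfolding online_alg_def feasible_def by blast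
  have CCsub: "CC A n gs \<subseteq> {1..<n}" unfolding CC_def[OF assms(1)] by auto
  have "CC A n gs = {1..<n}"
    using card_subset_eq[OF _ CCsub] c card_mono[OF _ CCsub] by fastforce
  then have allc: "\<And>v. v \<in> {1..<n} \<Longrightarrow> {0, v} \<in> ?H"
    using star_conn[OF assms(1) HE] unfolding CC_def[OF assms(1)] by fastforce
  have finH: "finite ?H" using HE unfolding EE_def[OF assms(1)] by (auto intro: finite_subset)
  have "(\<lambda>v. {0, v}) ` {1..<n} \<subseteq> {e\<in>?H. 0 \<in> e}" using allc by auto
  moreover have "card ((\<lambda>v. {0::nat, v}) ` {1..<n}) = n - 1"
    by (subst card_image) (auto simp: inj_on_def doubleton_eq_iff)
  ultimately have "deg ?H 0 \<ge> n - 1" unfolding deg_def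
    by (metis (no_types, lifting) card_mono finH finite_subset mem_Collect_eq subsetI)
  moreover have "deg ?H 0 \<le> maxdeg n ?H" unfolding maxdeg_def using n3 by (intro Max_ge) auto
  ultimately have md: "maxdeg n ?H \<ge> n - 1" by linarith
  obtain H0 where H0: "feasible ?E 0 gs H0" "card H0 \<le> 1" "finite H0"
  proof (cases "gs = []")
    case True then show ?thesis using that[of "{}"] unfolding feasible_def by auto
  next
    case False
    then obtain w where w: "\<forall>g\<in>set gs. w \<in> g" using I unfolding Inv_def[OF assms(1)] by auto
    show ?thesis
    proof (cases "\<exists>g. g \<in> set gs")
      case False then show ?thesis using that[of "{}"] unfolding feasible_def by auto
    next
      case True
      then obtain g where "g \<in> set gs" by auto
      then have "w \<in> {1..<n}" using w gr by blast
      then show ?thesis using w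
        by (intro that[of "{{0, w}}"])
          (auto simp: feasible_def conn_def EE_def[OF assms(1)] intro!: r_into_rtrancl)
    qed
  qed
  have "maxdeg n H0 \<le> 1" unfolding maxdeg_def
  proof (subst Max_le_iff)
    show "\<forall>a\<in>(\<lambda>v. deg H0 v) ` {..<n}. a \<le> 1"
    proof
      fix a assume "a \<in> (\<lambda>v. deg H0 v) ` {..<n}"
      then obtain v where "a = deg H0 v" by auto
      moreover have "deg H0 v \<le> card H0" unfolding deg_def
        using H0(3) by (auto intro: card_mono)
      ultimately show "a \<le> 1" using H0(2) by simp
    qed
  next
    show "(\<lambda>v. deg H0 v) ` {..<n} \<noteq> {}" proof -
      have "0 \<in> {..<n}" using n3 by simp
      then show ?thesis by blast
    qed
  qed simp
  moreover have "opt n ?E 0 gs \<le> maxdeg n H0"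
    unfolding opt_def
  proof (rule Min_le)
    have "{H. feasible ?E 0 gs H} \<subseteq> Pow ?E" unfolding feasible_def by auto
    moreover have "finite ?E" unfolding EE_def[OF assms(1)] by auto
    ultimately show "finite (maxdeg n ` {H. feasible ?E 0 gs H})" by (auto intro: finite_subset)
  qed (use H0 in auto)
  ultimately have op: "opt n ?E 0 gs \<le> 1" by linarith
  have "f n * real (opt n ?E 0 gs) \<le> max 0 (f n)"
  proof (cases "opt n ?E 0 gs = 0")
    case True then show ?thesis by simp
  next
    case False then have "opt n ?E 0 gs = 1" using op by linarith
    then show ?thesis by simp
  qed
  also have "\<dots> < real (n - 1)" using fn n3 by auto
  also have "\<dots> \<le> real (maxdeg n ?H)" using md by simp
  finally show ?thesis using v by blast
qed

end
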